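(* Let $G=(V,E)$ be a simple, unoriented, locally finite graph with graph distance $d$, and let $x\neq x'$ be two vertices of $G$ at finite distance, each of positive degree. For $t\in[0,1]$ let $K^t$ denote the set of couplings between the lazy random walk measures $\mu^t_x$ and $\mu^t_{x'}$, viewed as nonnegative real matrices indexed by $B_x\times B_{x'}$, and let $E_{xx'}$ be the matrix of this size whose only nonzero entry is a $1$ at position $(x,x')$. Then there exists $t_0>0$ such that for all $s,t\in(0,t_0]$, $$K^{s}-E_{xx'}=\frac{s}{t}\,\bigl(K^t-E_{xx'}\bigr),$$ i.e. $K^s$ and $K^t$ are homothetic with center $E_{xx'}$ and ratio $s/t$.
   Context: For a vertex $x$, $S_x=\{y\in V: y\sim x\}$ is the set of neighbours of $x$, $d_x=|S_x|$ its degree, and $B_x=\{x\}\cup S_x$. The graph distance $d(x,x')$ is the length of a shortest edge path from $x$ to $x'$. The lazy random walk is the probability measure $\mu^t_x$ on $V$ with $\mu^t_x(x)=1-t$, $\mu^t_x(y)=t/d_x$ for $y\in S_x$, and $\mu^t_x(y)=0$ otherwise. A coupling between probability measures $\mu,\mu'$ on $V$ is a nonnegative function $\xi$ on $V\times V$ with $\sum_{y'}\xi(y,y')=\mu(y)$ for all $y$ and $\sum_y\xi(y,y')=\mu'(y')$ for all $y'$; a coupling between $\mu^t_x$ and $\mu^t_{x'}$ vanishes outside $B_x\times B_{x'}$ and is identified with its restriction to $B_x\times B_{x'}$. *)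

theory Defs
  imports Main "HOL-Library.Extended_Nat"
begin

definition simple_graph :: "('a \<Rightarrow> 'a \<Rightarrow> bool) \<Rightarrow> bool" where
  "simple_graph E \<longleftrightarrow> (\<forall>x y. E x y \<longrightarrow> E y x) \<and> (\<forall>x. \<not> E x x)"

definition nbrs :: "('a \<Rightarrow> 'a \<Rightarrow> bool) \<Rightarrow> 'a \<Rightarrow> 'a set" where
  "nbrs E x = {y. E x y}"

definition locally_finite :: "('a \<Rightarrow> 'a \<Rightarrow> bool) \<Rightarrow> bool" where
  "locally_finite E \<longleftrightarrow> (\<forall>x. finite (nbrs E x))"

definition deg :: "('a \<Rightarrow> 'a \<Rightarrow> bool) \<Rightarrow> 'a \<Rightarrow> nat" where
  "deg E x = card (nbrs E x)"

definition ball1 :: "('a \<Rightarrow> 'a \<Rightarrow> bool) \<Rightarrow> 'a \<Rightarrow> 'a set" where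
  "ball1 E x = insert x (nbrs E x)"

definition walk :: "('a \<Rightarrow> 'a \<Rightarrow> bool) \<Rightarrow> 'a list \<Rightarrow> bool" where
  "walk E p \<longleftrightarrow> p \<noteq> [] \<and> (\<forall>i. Suc i < length p \<longrightarrow> E (p ! i) (p ! Suc i))"

definition graph_dist :: "('a \<Rightarrow> 'a \<Rightarrow> bool) \<Rightarrow> 'a \<Rightarrow> 'a \<Rightarrow> enat" where
  "graph_dist E x x' = (INF p \<in> {p. walk E p \<and> hd p = x \<and> last p = x'}. enat (length p - 1))"

definition lazy_rw :: "('a \<Rightarrow> 'a \<Rightarrow> bool) \<Rightarrow> real \<Rightarrow> 'a \<Rightarrow> 'a \<Rightarrow> real" where
  "lazy_rw E t x y = (if y = x then 1 - t else if E x y then t / real (deg E x) else 0)"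

text \<open>Couplings between mu^t_x and mu^t_x', identified with their restriction to
B_x \<times> B_x' (they vanish outside).\<close>

definition couplings :: "('a \<Rightarrow> 'a \<Rightarrow> bool) \<Rightarrow> real \<Rightarrow> 'a \<Rightarrow> 'a \<Rightarrow> ('a \<Rightarrow> 'a \<Rightarrow> real) set" where
  "couplings E t x x' = {\<xi>.
     (\<forall>y y'. 0 \<le> \<xi> y y') \<and>
     (\<forall>y y'. (y, y') \<notin> ball1 E x \<times> ball1 E x' \<longrightarrow> \<xi> y y' = 0) \<and>
     (\<forall>y \<in> ball1 E x. (\<Sum>y' \<in> ball1 E x'. \<xi> y y') = lazy_rw E t x y) \<and>
     (\<forall>y' \<in> ball1 E x'. (\<Sum>y \<in> ball1 E x. \<xi> y y') = lazy_rw E t x' y')}"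

definition Emat :: "'a \<Rightarrow> 'a \<Rightarrow> 'a \<Rightarrow> 'a \<Rightarrow> real" where
  "Emat x x' = (\<lambda>y y'. if y = x \<and> y' = x' then 1 else 0)"

end

theory Submission
  imports Defs
begin

lemma lower_bd:
  assumes sg: "simple_graph E" and lf: "locally_finite E" and d: "deg E x' > 0"
    and xi: "\<xi> \<in> couplings E t x x'"
  shows "\<xi> x x' \<ge> 1 - 2*t"
proof -
  have fin: "finite (nbrs E x')" "finite (nbrs E x)" using lf by (auto simp: locally_finite_def)
  have nx: "x' \<notin> nbrs E x'" using sg by (auto simp: simple_graph_def nbrs_def)
  have B: "ball1 E x' = insert x' (nbrs E x')" by (simp add: ball1_def)
  have pos: "\<And>y y'. 0 \<le> \<xi> y y'" and row: "\<And>y. y \<in> ball1 E x \<Longrightarrow> (\<Sum>y' \<in> ball1 E x'. \<xi> y y') = lazy_rw E t x y"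
    and col: "\<And>y'. y' \<in> ball1 E x' \<Longrightarrow> (\<Sum>y \<in> ball1 E x. \<xi> y y') = lazy_rw E t x' y'"
    using xi by (auto simp: couplings_def)
  have xB: "x \<in> ball1 E x" by (simp add: ball1_def)
  have finB: "finite (ball1 E x)" using fin by (simp add: ball1_def)
  have "(\<Sum>y' \<in> ball1 E x'. \<xi> x y') = 1 - t" using row[OF xB] by (simp add: lazy_rw_def)
  hence eq: "\<xi> x x' + (\<Sum>y' \<in> nbrs E x'. \<xi> x y') = 1 - t" using B nx fin by simp
  have le: "\<xi> x y' \<le> t / real (deg E x')" if "y' \<in> nbrs E x'" for y'
  proof -
    have "y' \<in> ball1 E x'" using that by (simp add: ball1_def)
    from col[OF this] have "(\<Sum>y \<in> ball1 E x. \<xi> y y') = t / real (deg E x')"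
      using that nx by (auto simp: lazy_rw_def nbrs_def)
    moreover have "\<xi> x y' \<le> (\<Sum>y \<in> ball1 E x. \<xi> y y')"
      by (rule member_le_sum[OF xB]) (use pos finB in auto)
    ultimately show ?thesis by simp
  qed
  have "(\<Sum>y' \<in> nbrs E x'. \<xi> x y') \<le> (\<Sum>y' \<in> nbrs E x'. t / real (deg E x'))"
    by (rule sum_mono) (use le in auto)
  also have "\<dots> = t" using d by (simp add: deg_def)
  finally show ?thesis using eq by linarith
qed

lemma transfer:
  assumes sg: "simple_graph E" and lf: "locally_finite E" and d: "deg E x' > 0"
    and s: "0 < s" "s \<le> 1/2" and t: "0 < t"
    and xi: "\<xi> \<in> couplings E t x x'"
  shows "(\<lambda>y y'. Emat x x' y y' + (s/t) * (\<xi> y y' - Emat x x' y y')) \<in> couplings E s x x'"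
proof -
  let ?a = "s/t"
  have fin: "finite (nbrs E x')" "finite (nbrs E x)" using lf by (auto simp: locally_finite_def)
  have finB: "finite (ball1 E x)" "finite (ball1 E x')" using fin by (auto simp: ball1_def)
  have xB: "x \<in> ball1 E x" "x' \<in> ball1 E x'" by (auto simp: ball1_def)
  have pos: "\<And>y y'. 0 \<le> \<xi> y y'" and out: "\<And>y y'. (y, y') \<notin> ball1 E x \<times> ball1 E x' \<Longrightarrow> \<xi> y y' = 0"
    and row: "\<And>y. y \<in> ball1 E x \<Longrightarrow> (\<Sum>y' \<in> ball1 E x'. \<xi> y y') = lazy_rw E t x y"
    and col: "\<And>y'. y' \<in> ball1 E x' \<Longrightarrow> (\<Sum>y \<in> ball1 E x. \<xi> y y') = lazy_rw E t x' y'"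
    using xi by (auto simp: couplings_def)
  have lb: "\<xi> x x' \<ge> 1 - 2*t" by (rule lower_bd[OF sg lf d xi])
  have a0: "0 < ?a" using s t by simp
  have nn: "0 \<le> Emat x x' y y' + ?a * (\<xi> y y' - Emat x x' y y')" for y y'
  proof (cases "y = x \<and> y' = x'")
    case True
    have "2*t \<le> t/s" using s t by (simp add: field_simps)
    hence "1 - t/s \<le> \<xi> x x'" using lb by linarith
    hence "t/s*(1 - \<xi> x x') \<le> t/s*(t/s)" by (smt (verit) mult_left_mono s(1) t zero_le_divide_iff)
    moreover have "?a * (t/s) = 1" using s t by simp
    have "0 \<le> 1 + ?a * (\<xi> x x' - 1)"
    proof -
      have "?a * (1 - \<xi> x x') \<le> ?a * (t/s)"
        using \<open>1 - t/s \<le> \<xi> x x'\<close> a0 by (intro mult_left_mono) auto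
      with \<open>?a * (t/s) = 1\<close> show ?thesis by (simp add: algebra_simps)
    qed
    thus ?thesis using True by (simp add: Emat_def)
  next
    case False
    thus ?thesis using pos[of y y'] s t by (auto simp: Emat_def)
  qed
  have sE1: "(\<Sum>y' \<in> ball1 E x'. Emat x x' y y') = (if y = x then 1 else 0)" for y
    using finB xB by (simp add: Emat_def)
  have sE2: "(\<Sum>y \<in> ball1 E x. Emat x x' y y') = (if y' = x' then 1 else 0)" for y'
    using finB xB by (simp add: Emat_def)
  have r: "(\<Sum>y' \<in> ball1 E x'. Emat x x' y y' + ?a * (\<xi> y y' - Emat x x' y y')) = lazy_rw E s x y"
    if "y \<in> ball1 E x" for y
  proof -
    have "(\<Sum>y' \<in> ball1 E x'. Emat x x' y y' + ?a * (\<xi> y y' - Emat x x' y y'))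
        = (1 - ?a) * (\<Sum>y' \<in> ball1 E x'. Emat x x' y y') + ?a * (\<Sum>y' \<in> ball1 E x'. \<xi> y y')"
      by (simp add: sum.distrib sum_distrib_left sum_subtractf algebra_simps)
    also have "\<dots> = (1 - ?a) * (if y = x then 1 else 0) + ?a * lazy_rw E t x y"
      using sE1 row[OF that] by simp
    also have "\<dots> = lazy_rw E s x y" using t by (auto simp: lazy_rw_def field_simps)
    finally show ?thesis .
  qed
  have c: "(\<Sum>y \<in> ball1 E x. Emat x x' y y' + ?a * (\<xi> y y' - Emat x x' y y')) = lazy_rw E s x' y'"
    if "y' \<in> ball1 E x'" for y'
  proof -
    have "(\<Sum>y \<in> ball1 E x. Emat x x' y y' + ?a * (\<xi> y y' - Emat x x' y y'))
        = (1 - ?a) * (\<Sum>y \<in> ball1 E x. Emat x x' y y') + ?a * (\<Sum>y \<in> ball1 E x. \<xi> y y')"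
      by (simp add: sum.distrib sum_distrib_left sum_subtractf algebra_simps)
    also have "\<dots> = (1 - ?a) * (if y' = x' then 1 else 0) + ?a * lazy_rw E t x' y'"
      using sE2 col[OF that] by simp
    also have "\<dots> = lazy_rw E s x' y'" using t by (auto simp: lazy_rw_def field_simps)
    finally show ?thesis .
  qed
  have o: "Emat x x' y y' + ?a * (\<xi> y y' - Emat x x' y y') = 0"
    if "(y, y') \<notin> ball1 E x \<times> ball1 E x'" for y y'
  proof -
    have "Emat x x' y y' = 0" using that xB by (auto simp: Emat_def)
    thus ?thesis using out[OF that] by simp
  qed
  show ?thesis unfolding couplings_def using nn r c o by blast
qed

theorem lemma1:
  fixes E :: "'a \<Rightarrow> 'a \<Rightarrow> bool" and x x' :: 'a
  assumes "simple_graph E" and "locally_finite E"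
    and "x \<noteq> x'" and "graph_dist E x x' < \<infinity>"
    and "deg E x > 0" and "deg E x' > 0"
  shows "\<exists>t0 > 0. \<forall>s t. 0 < s \<and> s \<le> t0 \<and> 0 < t \<and> t \<le> t0 \<longrightarrow>
           (\<lambda>\<xi> y y'. \<xi> y y' - Emat x x' y y') ` couplings E s x x'
         = (\<lambda>\<xi> y y'. (s / t) * (\<xi> y y' - Emat x x' y y')) ` couplings E t x x'"
proof (intro exI[of _ "1/2"] conjI allI impI)
  fix s t :: real
  assume st: "0 < s \<and> s \<le> 1/2 \<and> 0 < t \<and> t \<le> 1/2"
  note tr = transfer[OF assms(1,2,6)]
  show "(\<lambda>\<xi> y y'. \<xi> y y' - Emat x x' y y') ` couplings E s x x'
         = (\<lambda>\<xi> y y'. (s / t) * (\<xi> y y' - Emat x x' y y')) ` couplings E t x x'"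
  proof
    show "(\<lambda>\<xi> y y'. \<xi> y y' - Emat x x' y y') ` couplings E s x x'
         \<subseteq> (\<lambda>\<xi> y y'. (s / t) * (\<xi> y y' - Emat x x' y y')) ` couplings E t x x'"
    proof
      fix f assume "f \<in> (\<lambda>\<xi> y y'. \<xi> y y' - Emat x x' y y') ` couplings E s x x'"
      then obtain \<eta> where eta: "\<eta> \<in> couplings E s x x'" and f: "f = (\<lambda>y y'. \<eta> y y' - Emat x x' y y')" by blast
      let ?\<xi> = "\<lambda>y y'. Emat x x' y y' + (t/s) * (\<eta> y y' - Emat x x' y y')"
      have "?\<xi> \<in> couplings E t x x'" using tr[of t s \<eta>] st eta by auto
      moreover have "f = (\<lambda>y y'. (s / t) * (?\<xi> y y' - Emat x x' y y'))"
        using st by (auto simp: f fun_eq_iff)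
      ultimately show "f \<in> (\<lambda>\<xi> y y'. (s / t) * (\<xi> y y' - Emat x x' y y')) ` couplings E t x x'"
        by (intro image_eqI[where x="?\<xi>"]) simp_all
    qed
  next
    show "(\<lambda>\<xi> y y'. (s / t) * (\<xi> y y' - Emat x x' y y')) ` couplings E t x x'
         \<subseteq> (\<lambda>\<xi> y y'. \<xi> y y' - Emat x x' y y') ` couplings E s x x'"
    proof
      fix f assume "f \<in> (\<lambda>\<xi> y y'. (s / t) * (\<xi> y y' - Emat x x' y y')) ` couplings E t x x'"
      then obtain \<xi> where xi: "\<xi> \<in> couplings E t x x'" and f: "f = (\<lambda>y y'. (s / t) * (\<xi> y y' - Emat x x' y y'))" by blast
      let ?\<eta> = "\<lambda>y y'. Emat x x' y y' + (s/t) * (\<xi> y y' - Emat x x' y y')"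
      have "?\<eta> \<in> couplings E s x x'" using tr[of s t \<xi>] st xi by auto
      moreover have "f = (\<lambda>y y'. ?\<eta> y y' - Emat x x' y y')" by (auto simp: f fun_eq_iff)
      ultimately show "f \<in> (\<lambda>\<xi> y y'. \<xi> y y' - Emat x x' y y') ` couplings E s x x'"
        by (intro image_eqI[where x="?\<eta>"]) simp_all
    qed
  qed
qed (simp)

end
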